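(* Let $k$ and $l'$ be positive integers with $l'<k$. If $\mathcal{F} \subseteq 2^{[n]}$ is an $(n-l')$-trace $k$-Sperner family, then $|\mathcal{F}| \le (k-l'+o(1))\binom{n}{\lfloor n/2\rfloor}$, where $o(1)$ denotes a quantity tending to $0$ as $n\to\infty$ with $k$ and $l'$ fixed.
   Context: $[n]=\{1,\dots,n\}$ and $2^{[n]}$ is the family of all subsets of $[n]$. A chain of length $m$ is a sequence of sets $F_1\subsetneq F_2\subsetneq\dots\subsetneq F_m$. A family is $k$-Sperner if it contains no chain of length $k+1$. For a set $F$ and a set $X$, the trace of $F$ on $X$ is $F\cap X$, and for a family $\mathcal{F}$, $\mathcal{F}|_X=\{F\cap X: F\in\mathcal{F}\}$. A family $\mathcal{F}\subseteq 2^{[n]}$ is $l$-trace $k$-Sperner if for every $l$-element subset $L\subseteq[n]$ the family $\mathcal{F}|_L$ is $k$-Sperner. *)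

theory Defs
  imports Complex_Main
begin

definition is_chain_in :: "'a set set \<Rightarrow> 'a set list \<Rightarrow> bool" where
  "is_chain_in G cs \<longleftrightarrow> set cs \<subseteq> G \<and> sorted_wrt (\<subset>) cs"

definition k_Sperner :: "nat \<Rightarrow> 'a set set \<Rightarrow> bool" where
  "k_Sperner k G \<longleftrightarrow> \<not> (\<exists>cs. is_chain_in G cs \<and> length cs = k + 1)"

definition trace :: "'a set set \<Rightarrow> 'a set \<Rightarrow> 'a set set" where
  "trace G X = (\<lambda>F. F \<inter> X) ` G"

definition trace_k_Sperner :: "nat \<Rightarrow> nat \<Rightarrow> nat \<Rightarrow> nat set set \<Rightarrow> bool" where
  "trace_k_Sperner n l k G \<longleftrightarrow>
     (\<forall>L. L \<subseteq> {1..n} \<and> card L = l \<longrightarrow> k_Sperner k (trace G L))"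

end

theory Submission
  imports Defs "HOL.Binomial_Plus"
begin


definition TS :: "'a set \<Rightarrow> nat \<Rightarrow> nat \<Rightarrow> 'a set set \<Rightarrow> bool" where
  "TS S l k F \<longleftrightarrow> (\<forall>L. L \<subseteq> S \<and> card L = card S - l \<longrightarrow> k_Sperner k (trace F L))"

lemma k_Sperner_mono: "G \<subseteq> G' \<Longrightarrow> k_Sperner k G' \<Longrightarrow> k_Sperner k G"
  unfolding k_Sperner_def is_chain_in_def by blast

lemma trace_mono: "G \<subseteq> G' \<Longrightarrow> trace G L \<subseteq> trace G' L"
  unfolding trace_def by blast

lemma TS_mono: "G \<subseteq> G' \<Longrightarrow> TS S l k G' \<Longrightarrow> TS S l k G"
  unfolding TS_def using k_Sperner_mono trace_mono by metis

lemma sorted_last: "sorted_wrt (\<subset>) cs \<Longrightarrow> cs \<noteq> [] \<Longrightarrow> c \<in> set cs \<Longrightarrow> c \<subseteq> last cs"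
proof (induction cs)
  case Nil then show ?case by simp
next
  case (Cons a cs)
  show ?case
  proof (cases "cs = []")
    case True then show ?thesis using Cons by simp
  next
    case False
    then have "last cs \<in> set cs" by simp
    then show ?thesis using Cons False by auto
  qed
qed

lemma chain_snoc:
  assumes "is_chain_in G cs" "cs \<noteq> []" "last cs \<subset> X" "X \<in> G"
  shows "is_chain_in G (cs @ [X])"
  using assms sorted_last[of cs] unfolding is_chain_in_def
  by (auto simp: sorted_wrt_append)

definition antichain :: "'a set set \<Rightarrow> bool" where
  "antichain A \<longleftrightarrow> (\<forall>X\<in>A. \<forall>Y\<in>A. \<not> X \<subset> Y)"

definition lam :: "'a set \<Rightarrow> 'a set set \<Rightarrow> real" where
  "lam S F = (\<Sum>A\<in>F. 1 / real (card S choose card A))"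

lemma antichain_subset: "B \<subseteq> A \<Longrightarrow> antichain A \<Longrightarrow> antichain B"
  unfolding antichain_def by blast

lemma sum_link:
  fixes g :: "nat \<Rightarrow> real"
  assumes fin: "finite S" and sub: "A \<subseteq> Pow S"
  shows "(\<Sum>x\<in>S. \<Sum>B\<in>(\<lambda>X. X - {x}) ` {X\<in>A. x \<in> X}. g (card B))
         = (\<Sum>X\<in>A. real (card X) * g (card X - 1))"
proof -
  have finA: "finite A" using fin sub by (meson finite_Pow_iff finite_subset)
  have "(\<Sum>x\<in>S. \<Sum>B\<in>(\<lambda>X. X - {x}) ` {X\<in>A. x \<in> X}. g (card B))
      = (\<Sum>x\<in>S. \<Sum>X\<in>{X\<in>A. x \<in> X}. g (card X - 1))"
  proof (rule sum.cong[OF refl])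
    fix x assume "x \<in> S"
    have inj: "inj_on (\<lambda>X. X - {x}) {X\<in>A. x \<in> X}"
      by (rule inj_onI) (metis insert_Diff mem_Collect_eq)
    have "(\<Sum>B\<in>(\<lambda>X. X - {x}) ` {X\<in>A. x \<in> X}. g (card B)) = (\<Sum>X\<in>{X\<in>A. x \<in> X}. g (card (X - {x})))"
      by (subst sum.reindex[OF inj]) simp
    also have "\<dots> = (\<Sum>X\<in>{X\<in>A. x \<in> X}. g (card X - 1))"
      apply (rule sum.cong[OF refl])
      using sub fin by (auto intro!: arg_cong[where f=g] simp: card_Diff_singleton_if dest!: finite_subset)
    finally show "(\<Sum>B\<in>(\<lambda>X. X - {x}) ` {X\<in>A. x \<in> X}. g (card B)) = (\<Sum>X\<in>{X\<in>A. x \<in> X}. g (card X - 1))" .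
  qed
  also have "\<dots> = (\<Sum>X\<in>A. \<Sum>x\<in>{x\<in>S. x \<in> X}. g (card X - 1))"
    by (rule sum.swap_restrict[OF fin finA])
  also have "\<dots> = (\<Sum>X\<in>A. real (card X) * g (card X - 1))"
  proof (rule sum.cong[OF refl])
    fix X assume "X \<in> A"
    then have "{x\<in>S. x \<in> X} = X" using sub by auto
    then show "(\<Sum>x\<in>{x\<in>S. x \<in> X}. g (card X - 1)) = real (card X) * g (card X - 1)" by simp
  qed
  finally show ?thesis .
qed

lemma sum_colink:
  fixes g :: "nat \<Rightarrow> real"
  assumes fin: "finite S" and sub: "A \<subseteq> Pow S"
  shows "(\<Sum>x\<in>S. \<Sum>B\<in>{X\<in>A. x \<notin> X}. g (card B))
         = (\<Sum>X\<in>A. real (card S - card X) * g (card X))"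
proof -
  have finA: "finite A" using fin sub by (meson finite_Pow_iff finite_subset)
  have "(\<Sum>x\<in>S. \<Sum>B\<in>{X\<in>A. x \<notin> X}. g (card B)) = (\<Sum>X\<in>A. \<Sum>x\<in>{x\<in>S. x \<notin> X}. g (card X))"
    by (rule sum.swap_restrict[OF fin finA])
  also have "\<dots> = (\<Sum>X\<in>A. real (card S - card X) * g (card X))"
  proof (rule sum.cong[OF refl])
    fix X assume "X \<in> A"
    then have "{x\<in>S. x \<notin> X} = S - X" "X \<subseteq> S" using sub by auto
    then show "(\<Sum>x\<in>{x\<in>S. x \<notin> X}. g (card X)) = real (card S - card X) * g (card X)"
      using fin by (simp add: card_Diff_subset finite_subset)
  qed
  finally show ?thesis .
qed

lemma LYM:
  assumes "finite S" "A \<subseteq> Pow S" "antichain A"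
  shows "lam S A \<le> 1"
  using assms
proof (induction "card S" arbitrary: S A rule: less_induct)
  case less
  note fin = less.prems(1) and sub = less.prems(2) and ac = less.prems(3)
  define n where "n = card S"
  have finA: "finite A" using fin sub by (meson finite_Pow_iff finite_subset)
  show ?case
  proof (cases "{} \<in> A")
    case True
    then have "A = {{}}" using ac unfolding antichain_def by blast
    then show ?thesis by (simp add: lam_def)
  next
    case noe: False
    show ?thesis
    proof (cases "S \<in> A")
      case True
      then have "A = {S}" using ac sub unfolding antichain_def by blast
      then show ?thesis by (simp add: lam_def)
    next
      case noS: False
      show ?thesis
      proof (cases "A = {}")
        case True then show ?thesis by (simp add: lam_def)
      next
        case nonempty: False
        have cardA: "1 \<le> card X \<and> card X \<le> n - 1" if "X \<in> A" for X
        proof -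
          have "X \<subseteq> S" "X \<noteq> S" "X \<noteq> {}" using that sub noe noS by auto
          then have "card X < n" using fin n_def by (simp add: psubset_card_mono psubsetI)
          moreover have "card X \<noteq> 0" using \<open>X \<noteq> {}\<close> \<open>X \<subseteq> S\<close> fin by (meson card_0_eq finite_subset)
          ultimately show ?thesis by linarith
        qed
        obtain X0 where "X0 \<in> A" using nonempty by blast
        then have n1: "1 \<le> n" using cardA by fastforce
        define lk where "lk x = (\<lambda>X. X - {x}) ` {X\<in>A. x \<in> X}" for x
        define cl where "cl x = {X\<in>A. x \<notin> X}" for x
        have IH1: "lam (S - {x}) (lk x) \<le> 1" if "x \<in> S" for x
        proof (rule less.hyps)
          show "card (S - {x}) < card S" by (rule card_Diff1_less[OF fin that])
          show "finite (S - {x})" using fin by simp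
          show "lk x \<subseteq> Pow (S - {x})" using sub unfolding lk_def by auto
          show "antichain (lk x)" using ac unfolding antichain_def lk_def
            by auto (metis Diff_insert_absorb mk_disjoint_insert psubset_eq subset_insert_iff)+
        qed
        have IH2: "lam (S - {x}) (cl x) \<le> 1" if "x \<in> S" for x
        proof (rule less.hyps)
          show "card (S - {x}) < card S" by (rule card_Diff1_less[OF fin that])
          show "finite (S - {x})" using fin by simp
          show "cl x \<subseteq> Pow (S - {x})" using sub unfolding cl_def by auto
          show "antichain (cl x)" using ac unfolding antichain_def cl_def by auto
        qed
        define g where "g m = 1 / real ((n - 1) choose m)" for m
        have cS: "card (S - {x}) = n - 1" if "x \<in> S" for x using that fin n_def by simp
        have s1: "(\<Sum>x\<in>S. lam (S - {x}) (lk x)) = (\<Sum>X\<in>A. real (card X) * g (card X - 1))"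
          unfolding lam_def lk_def using sum_link[OF fin sub, of g]
          by (simp add: cS g_def n_def cong: sum.cong)
        have s2: "(\<Sum>x\<in>S. lam (S - {x}) (cl x)) = (\<Sum>X\<in>A. real (n - card X) * g (card X))"
          unfolding lam_def cl_def using sum_colink[OF fin sub, of g]
          by (simp add: cS g_def n_def cong: sum.cong)
        have e1: "real (card X) * g (card X - 1) = real n / real (n choose card X)" if XA: "X \<in> A" for X
        proof -
          obtain k where k: "card X = Suc k" using cardA[OF XA] by (cases "card X") auto
          have "Suc k * (n choose Suc k) = n * (n - 1 choose k)" by (rule binomial_absorption)
          then have "real (Suc k) * real (n choose Suc k) = real n * real (n - 1 choose k)"
            by (metis of_nat_mult)
          moreover have "(n - 1 choose k) > 0" using cardA[OF XA] k by (intro zero_less_binomial) linarith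
          moreover have "(n choose Suc k) > 0" using cardA[OF XA] k by (intro zero_less_binomial) linarith
          ultimately show ?thesis unfolding g_def k by (simp add: field_simps)
        qed
        have e2: "real (n - card X) * g (card X) = real n / real (n choose card X)" if XA: "X \<in> A" for X
        proof -
          have "(n - card X) * (n choose card X) = n * (n - 1 choose card X)" by (rule binomial_absorb_comp)
          then have "real (n - card X) * real (n choose card X) = real n * real (n - 1 choose card X)"
            by (metis of_nat_mult)
          moreover have "(n - 1 choose card X) > 0" using cardA[OF XA] by (intro zero_less_binomial) linarith
          moreover have "(n choose card X) > 0" using cardA[OF XA] by (intro zero_less_binomial) linarith
          ultimately show ?thesis unfolding g_def by (simp add: field_simps)
        qed
        have "(\<Sum>x\<in>S. lam (S - {x}) (lk x) + lam (S - {x}) (cl x)) \<le> (\<Sum>x\<in>S. 2)"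
          by (rule sum_mono) (use IH1 IH2 in fastforce)
        also have "\<dots> = 2 * real n" using n_def by simp
        finally have le: "(\<Sum>x\<in>S. lam (S - {x}) (lk x) + lam (S - {x}) (cl x)) \<le> 2 * real n" .
        have "(\<Sum>x\<in>S. lam (S - {x}) (lk x) + lam (S - {x}) (cl x))
              = (\<Sum>X\<in>A. real n / real (n choose card X)) + (\<Sum>X\<in>A. real n / real (n choose card X))"
        proof -
          have t1: "(\<Sum>X\<in>A. real (card X) * g (card X - 1)) = (\<Sum>X\<in>A. real n / real (n choose card X))"
            by (rule sum.cong[OF refl], rule e1)
          have t2: "(\<Sum>X\<in>A. real (n - card X) * g (card X)) = (\<Sum>X\<in>A. real n / real (n choose card X))"
            by (rule sum.cong[OF refl], rule e2)
          show ?thesis unfolding sum.distrib s1 s2 t1 t2 ..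
        qed
        also have "\<dots> = 2 * real n * lam S A"
          unfolding lam_def n_def by (simp add: sum_distrib_left)
        finally have "2 * real n * lam S A \<le> 2 * real n" using le by simp
        then show ?thesis using n1 by simp
      qed
    qed
  qed
qed

lemma k_Sperner_0: "k_Sperner 0 F \<Longrightarrow> F = {}"
proof (rule ccontr)
  assume "k_Sperner 0 F" "F \<noteq> {}"
  then obtain A where "A \<in> F" by blast
  then have "is_chain_in F [A] \<and> length [A] = 0 + 1" unfolding is_chain_in_def by simp
  then show False using \<open>k_Sperner 0 F\<close> unfolding k_Sperner_def by blast
qed

lemma lam_kSperner:
  assumes "finite S" "F \<subseteq> Pow S" "k_Sperner k F"
  shows "lam S F \<le> real k"
  using assms(2,3)
proof (induction k arbitrary: F)
  case 0
  then have "F = {}" using k_Sperner_0 by blast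
  then show ?case by (simp add: lam_def)
next
  case (Suc k)
  have finF: "finite F" using assms(1) Suc.prems(1) by (meson finite_Pow_iff finite_subset)
  define Mn where "Mn = {A\<in>F. \<not> (\<exists>B\<in>F. B \<subset> A)}"
  have ac: "antichain Mn" unfolding antichain_def Mn_def by blast
  have ks: "k_Sperner k (F - Mn)"
    unfolding k_Sperner_def
  proof
    assume "\<exists>cs. is_chain_in (F - Mn) cs \<and> length cs = k + 1"
    then obtain cs where cs: "is_chain_in (F - Mn) cs" "length cs = k + 1" by blast
    then obtain c cs' where c: "cs = c # cs'" by (cases cs) auto
    then have "c \<in> F - Mn" using cs unfolding is_chain_in_def by auto
    then obtain B where B: "B \<in> F" "B \<subset> c" unfolding Mn_def by blast
    have "is_chain_in F (B # cs)"
      using cs B c unfolding is_chain_in_def by auto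
    moreover have "length (B # cs) = Suc k + 1" using cs by simp
    ultimately show False using Suc.prems(2) unfolding k_Sperner_def by blast
  qed
  have "lam S F = lam S (F - Mn) + lam S Mn"
    unfolding lam_def by (rule sum.subset_diff) (use finF Mn_def in auto)
  also have "\<dots> \<le> real k + 1"
  proof (rule add_mono)
    show "lam S (F - Mn) \<le> real k" using Suc.IH[OF _ ks] Suc.prems(1) by blast
    show "lam S Mn \<le> 1" using LYM[OF assms(1) _ ac] Suc.prems(1) Mn_def by blast
  qed
  finally show ?case by simp
qed

lemma card_le_lam:
  assumes "finite S" "F \<subseteq> Pow S"
  shows "real (card F) \<le> real (card S choose (card S div 2)) * lam S F"
proof -
  have finF: "finite F" using assms by (meson finite_Pow_iff finite_subset)
  have "real (card F) = (\<Sum>A\<in>F. 1)" by simp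
  also have "\<dots> \<le> (\<Sum>A\<in>F. real (card S choose (card S div 2)) * (1 / real (card S choose card A)))"
  proof (rule sum_mono)
    fix A assume "A \<in> F"
    then have "card A \<le> card S" using assms by (meson PowD card_mono subsetD)
    then have "0 < card S choose card A" by simp
    moreover have "card S choose card A \<le> card S choose (card S div 2)" by (rule binomial_maximum)
    ultimately show "1 \<le> real (card S choose (card S div 2)) * (1 / real (card S choose card A))"
      by (simp add: field_simps)
  qed
  also have "\<dots> = real (card S choose (card S div 2)) * lam S F"
    unfolding lam_def by (simp add: sum_distrib_left)
  finally show ?thesis .
qed

lemma leaf0:
  assumes "finite S" "F \<subseteq> Pow S" "TS S 0 k F"
  shows "real (card F) \<le> real k * real (card S choose (card S div 2))"
proof -
  have "trace F S = F" using assms(2) unfolding trace_def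
    by (auto simp: image_iff Int_absorb2)
  then have "k_Sperner k F" using assms(3) unfolding TS_def by (metis diff_zero order_refl)
  then have "lam S F \<le> real k" using lam_kSperner assms by blast
  then show ?thesis using card_le_lam[OF assms(1,2)]
    by (smt (verit, ccfv_SIG) mult.commute mult_left_mono of_nat_0_le_iff)
qed




lemma TS_delete:
  assumes "finite S" "x \<in> S" "1 \<le> l" "TS S l k F"
  shows "TS (S - {x}) (l - 1) k ((\<lambda>A. A - {x}) ` F)"
  unfolding TS_def
proof (intro allI impI)
  fix L assume L: "L \<subseteq> S - {x} \<and> card L = card (S - {x}) - (l - 1)"
  then have "card L = card S - l" using assms by simp
  moreover have "L \<subseteq> S" using L by blast
  ultimately have "k_Sperner k (trace F L)" using assms(4) unfolding TS_def by blast
  moreover have "trace ((\<lambda>A. A - {x}) ` F) L = trace F L"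
  proof -
    have "\<And>A. (A - {x}) \<inter> L = A \<inter> L" using L by blast
    then show ?thesis unfolding trace_def image_image by simp
  qed
  ultimately show "k_Sperner k (trace ((\<lambda>A. A - {x}) ` F) L)" by simp
qed

lemma TS_pairs:
  assumes "finite S" "x \<in> S" "l < card S" "1 \<le> k" "TS S l k F"
  shows "TS (S - {x}) l (k - 1) {B\<in>F. x \<notin> B \<and> insert x B \<in> F}"
  unfolding TS_def
proof (intro allI impI)
  define P where "P = {B\<in>F. x \<notin> B \<and> insert x B \<in> F}"
  fix L' assume L': "L' \<subseteq> S - {x} \<and> card L' = card (S - {x}) - l"
  define L where "L = insert x L'"
  have xL': "x \<notin> L'" using L' by blast
  have finL': "finite L'" using L' assms(1) by (meson finite_Diff finite_subset)
  have cL: "card L = card S - l" using L' assms xL' finL' unfolding L_def by simp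
  have LS: "L \<subseteq> S" using L' assms(2) unfolding L_def by blast
  show "k_Sperner (k - 1) (trace P L')"
    unfolding k_Sperner_def
  proof
    assume "\<exists>cs. is_chain_in (trace P L') cs \<and> length cs = k - 1 + 1"
    then obtain cs where cs: "is_chain_in (trace P L') cs" "length cs = k" using assms(4) by auto
    have ne: "cs \<noteq> []" using cs assms(4) by auto
    have sub: "trace P L' \<subseteq> trace F L"
    proof
      fix T assume "T \<in> trace P L'"
      then obtain B where B: "B \<in> P" "T = B \<inter> L'" unfolding trace_def by blast
      then have "T = B \<inter> L" unfolding L_def P_def by blast
      moreover have "B \<in> F" using B unfolding P_def by blast
      ultimately show "T \<in> trace F L" unfolding trace_def by blast
    qed
    have chF: "is_chain_in (trace F L) cs" using cs(1) sub unfolding is_chain_in_def by blast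
    have "last cs \<in> trace P L'" using cs(1) ne unfolding is_chain_in_def by auto
    then obtain B where B: "B \<in> P" "last cs = B \<inter> L'" unfolding trace_def by auto
    have "insert x (last cs) = insert x B \<inter> L" using B unfolding L_def by blast
    moreover have "insert x B \<in> F" using B unfolding P_def by blast
    ultimately have inF: "insert x (last cs) \<in> trace F L" unfolding trace_def by blast
    have "x \<notin> last cs" using B xL' by blast
    then have "last cs \<subset> insert x (last cs)" by blast
    then have "is_chain_in (trace F L) (cs @ [insert x (last cs)])"
      using chain_snoc[OF chF ne _ inF] by blast
    moreover have "length (cs @ [insert x (last cs)]) = k + 1" using cs by simp
    ultimately show False using assms(5) LS cL unfolding TS_def k_Sperner_def by blast
  qed
qed

lemma card_split:
  assumes "finite F"
  shows "card F \<le> card ((\<lambda>A. A - {x}) ` F) + card {B\<in>F. x \<notin> B \<and> insert x B \<in> F}"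
proof -
  define F0 where "F0 = {A\<in>F. x \<notin> A}"
  define F1 where "F1 = {A\<in>F. x \<in> A}"
  have fin0: "finite F0" and fin1: "finite F1" using assms unfolding F0_def F1_def by auto
  have "card F = card F0 + card F1"
  proof -
    have "F = F0 \<union> F1" "F0 \<inter> F1 = {}" unfolding F0_def F1_def by auto
    then show ?thesis using card_Un_disjoint fin0 fin1 by metis
  qed
  moreover have inj: "inj_on (\<lambda>A. A - {x}) F1"
    by (rule inj_onI) (metis F1_def insert_Diff mem_Collect_eq)
  then have "card ((\<lambda>A. A - {x}) ` F1) = card F1" by (rule card_image)
  moreover have "card ((\<lambda>A. A - {x}) ` F) = card (F0 \<union> (\<lambda>A. A - {x}) ` F1)"
  proof -
    have "(\<lambda>A. A - {x}) ` F = (\<lambda>A. A - {x}) ` F0 \<union> (\<lambda>A. A - {x}) ` F1"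
      unfolding F0_def F1_def by blast
    moreover have "(\<lambda>A. A - {x}) ` F0 = F0" unfolding F0_def by force
    ultimately show ?thesis by (simp add: image_Un)
  qed
  moreover have "card (F0 \<union> (\<lambda>A. A - {x}) ` F1) + card (F0 \<inter> (\<lambda>A. A - {x}) ` F1) = card F0 + card ((\<lambda>A. A - {x}) ` F1)"
    using card_Un_Int[of F0 "(\<lambda>A. A - {x}) ` F1"] fin0 fin1 by simp
  moreover have "card (F0 \<inter> (\<lambda>A. A - {x}) ` F1) \<le> card {B\<in>F. x \<notin> B \<and> insert x B \<in> F}"
  proof (rule card_mono)
    show "finite {B\<in>F. x \<notin> B \<and> insert x B \<in> F}" using assms by auto
    show "F0 \<inter> (\<lambda>A. A - {x}) ` F1 \<subseteq> {B\<in>F. x \<notin> B \<and> insert x B \<in> F}"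
    proof
      fix B assume "B \<in> F0 \<inter> (\<lambda>A. A - {x}) ` F1"
      then obtain A where A: "B \<in> F" "x \<notin> B" "A \<in> F" "x \<in> A" "B = A - {x}"
        unfolding F0_def F1_def by blast
      then have "insert x B = A" by blast
      then show "B \<in> {B\<in>F. x \<notin> B \<and> insert x B \<in> F}" using A by blast
    qed
  qed
  ultimately show ?thesis by linarith
qed




definition core :: "nat \<Rightarrow> 'a set set \<Rightarrow> bool" where
  "core j H \<longleftrightarrow> H \<noteq> {} \<and> (\<forall>A\<in>H. \<forall>x\<in>A. j < card {B\<in>H. A - {x} \<subseteq> B})"

definition Dset :: "'a set set \<Rightarrow> 'a set set" where
  "Dset H = {A - {x} | A x. A \<in> H \<and> x \<in> A}"

lemma finite_Dset:
  assumes "finite H" "\<forall>A\<in>H. finite A"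
  shows "finite (Dset H)"
proof -
  have "Dset H \<subseteq> (\<Union>A\<in>H. (\<lambda>x. A - {x}) ` A)" unfolding Dset_def by blast
  moreover have "finite (\<Union>A\<in>H. (\<lambda>x. A - {x}) ` A)" using assms by simp
  ultimately show ?thesis by (rule finite_subset)
qed

lemma peel:
  assumes "finite H" "\<forall>A\<in>H. finite A \<and> card A = j" "\<forall>H'\<subseteq>H. \<not> core j H'"
  shows "card H \<le> j * card (Dset H)"
  using assms
proof (induction "card H" arbitrary: H rule: less_induct)
  case less
  show ?case
  proof (cases "H = {}")
    case True then show ?thesis by simp
  next
    case False
    then have "\<not> core j H" using less.prems(3) by blast
    then obtain A x where Ax: "A \<in> H" "x \<in> A" "card {B\<in>H. A - {x} \<subseteq> B} \<le> j"
      using False unfolding core_def by (auto simp: not_less)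
    define D where "D = A - {x}"
    define R where "R = {B\<in>H. D \<subseteq> B}"
    define H1 where "H1 = H - R"
    have AR: "A \<in> R" unfolding R_def D_def using Ax by blast
    have finR: "finite R" using less.prems(1) unfolding R_def by simp
    have lt: "card H1 < card H" unfolding H1_def
    proof (rule psubset_card_mono[OF less.prems(1)])
      show "H - R \<subset> H" using AR Ax(1) by blast
    qed
    have p1: "finite H1" using less.prems(1) unfolding H1_def by simp
    have p2: "\<forall>A\<in>H1. finite A \<and> card A = j" using less.prems(2) unfolding H1_def by blast
    have p3: "\<forall>H'\<subseteq>H1. \<not> core j H'" using less.prems(3) unfolding H1_def by blast
    have IH: "card H1 \<le> j * card (Dset H1)" by (rule less.hyps[OF lt p1 p2 p3])
    have finD: "finite (Dset H)" using finite_Dset less.prems by blast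
    have DH: "D \<in> Dset H" unfolding Dset_def D_def using Ax by blast
    have "Dset H1 \<subseteq> Dset H - {D}"
    proof
      fix E assume "E \<in> Dset H1"
      then obtain B y where B: "B \<in> H1" "y \<in> B" "E = B - {y}" unfolding Dset_def by blast
      then have "E \<in> Dset H" unfolding Dset_def H1_def by blast
      moreover have "E \<noteq> D"
      proof
        assume "E = D"
        then have "B \<in> R" using B unfolding R_def H1_def by blast
        then show False using B unfolding H1_def by blast
      qed
      ultimately show "E \<in> Dset H - {D}" by blast
    qed
    then have "card (Dset H1) \<le> card (Dset H - {D})" by (rule card_mono[OF finite_Diff[OF finD]])
    also have "\<dots> = card (Dset H) - 1" using DH finD by (simp add: card_Diff_singleton)
    finally have c1: "card (Dset H1) \<le> card (Dset H) - 1" .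
    have "card (Dset H) \<noteq> 0" using DH finD by auto
    then have "card (Dset H) \<ge> 1" by simp
    have cH: "card H = card H1 + card R"
    proof -
      have "R \<subseteq> H" unfolding R_def by blast
      then show ?thesis unfolding H1_def using less.prems(1) finR
        using card_Diff_subset[OF finR \<open>R \<subseteq> H\<close>] card_mono[OF less.prems(1) \<open>R \<subseteq> H\<close>] by simp
    qed
    have "card R \<le> j" using Ax(3) unfolding R_def D_def .
    then have "card H \<le> j * (card (Dset H) - 1) + j" using cH IH c1
    proof -
      have "j * card (Dset H1) \<le> j * (card (Dset H) - 1)" using c1 by simp
      then show ?thesis using cH IH \<open>card R \<le> j\<close> by linarith
    qed
    also have "\<dots> = j * card (Dset H)" using \<open>card (Dset H) \<ge> 1\<close>
    proof -
      obtain c where "card (Dset H) = Suc c" using \<open>card (Dset H) \<ge> 1\<close> by (cases "card (Dset H)") auto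
      then show ?thesis by simp
    qed
    finally show ?thesis .
  qed
qed

lemma core_chain:
  assumes finT: "finite T" and Hsub: "H \<subseteq> {A. A \<subseteq> T \<and> card A = j}" and cH: "core j H" and j1: "1 \<le> j"
  shows "\<not> TS T j j H"
proof
  assume ts: "TS T j j H"
  have Hmem: "A \<subseteq> T \<and> card A = j \<and> finite A" if "A \<in> H" for A
  proof -
    have "A \<in> {A. A \<subseteq> T \<and> card A = j}" using that Hsub by blast
    then have "A \<subseteq> T" "card A = j" by auto
    moreover have "finite A" using \<open>A \<subseteq> T\<close> finT finite_subset by blast
    ultimately show ?thesis by blast
  qed
  obtain A0 where A0: "A0 \<in> H" using cH unfolding core_def by blast
  have A0T: "A0 \<subseteq> T" and cA0: "card A0 = j" using Hmem[OF A0] by auto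
  have finA0: "finite A0" using A0T finT by (rule finite_subset)
  define L where "L = T - A0"
  have LT: "L \<subseteq> T" unfolding L_def by blast
  have cL: "card L = card T - j" unfolding L_def using card_Diff_subset[OF finA0 A0T] cA0 by simp
  have claim: "\<exists>A\<in>H. card (A \<inter> L) = i \<and> (\<exists>cs. is_chain_in (trace H L) cs \<and> length cs = Suc i \<and> last cs = A \<inter> L)"
    if "i \<le> j" for i
    using that
  proof (induction i)
    case 0
    have "A0 \<inter> L = {}" unfolding L_def by blast
    moreover have "{} \<in> trace H L" using A0 \<open>A0 \<inter> L = {}\<close> unfolding trace_def by (metis image_eqI)
    ultimately have "is_chain_in (trace H L) [A0 \<inter> L]" unfolding is_chain_in_def by simp
    then show ?case using A0 \<open>A0 \<inter> L = {}\<close> by (intro bexI[of _ A0]) (auto intro!: exI[of _ "[A0 \<inter> L]"])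
  next
    case (Suc i)
    have "i \<le> j" using Suc.prems by simp
    then have "\<exists>A\<in>H. card (A \<inter> L) = i \<and> (\<exists>cs. is_chain_in (trace H L) cs \<and> length cs = Suc i \<and> last cs = A \<inter> L)"
      by (rule Suc.IH)
    then obtain A cs where A: "A \<in> H" "card (A \<inter> L) = i" and cs: "is_chain_in (trace H L) cs" "length cs = Suc i" "last cs = A \<inter> L"
      by blast
    have AT: "A \<subseteq> T" and cA: "card A = j" using Hmem[OF A(1)] by auto
    have finA: "finite A" using AT finT by (rule finite_subset)
    have "A = (A \<inter> A0) \<union> (A \<inter> L)" "(A \<inter> A0) \<inter> (A \<inter> L) = {}" using AT unfolding L_def by blast+
    then have "card A = card (A \<inter> A0) + card (A \<inter> L)"
      using card_Un_disjoint[of "A \<inter> A0" "A \<inter> L"] finA by simp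
    then have "card (A \<inter> A0) = j - i" using cA A(2) by simp
    then have "A \<inter> A0 \<noteq> {}" using Suc.prems by auto
    then obtain x where x: "x \<in> A" "x \<in> A0" by blast
    define D where "D = A - {x}"
    have finD: "finite D" unfolding D_def using finA by simp
    have cD: "card D = j - 1" unfolding D_def using finA x cA by simp
    have big: "j < card {B\<in>H. D \<subseteq> B}" using cH A x unfolding core_def D_def by blast
    have "\<exists>B\<in>H. D \<subseteq> B \<and> \<not> B \<subseteq> D \<union> A0"
    proof (rule ccontr)
      assume nt: "\<not> (\<exists>B\<in>H. D \<subseteq> B \<and> \<not> B \<subseteq> D \<union> A0)"
      have sub: "{B\<in>H. D \<subseteq> B} \<subseteq> (\<lambda>y. insert y D) ` A0"
        proof
          fix B assume B: "B \<in> {B\<in>H. D \<subseteq> B}"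
          then have BH: "B \<in> H" and DB: "D \<subseteq> B" by auto
          then have "B \<subseteq> D \<union> A0" using nt by blast
          have cB: "card B = j" using Hmem[OF BH] by blast
          have finB: "finite B" using Hmem[OF BH] by blast
          have "D \<noteq> B" using cD cB j1 by auto
          then obtain y where y: "y \<in> B" "y \<notin> D" using DB by blast
          then have yA0: "y \<in> A0" using \<open>B \<subseteq> D \<union> A0\<close> by blast
          have "insert y D \<subseteq> B" using y DB by blast
          moreover have "card (insert y D) = card B" using finD y cD cB j1 by simp
          ultimately have "insert y D = B" by (rule card_subset_eq[OF finB])
          then show "B \<in> (\<lambda>y. insert y D) ` A0" using yA0 by blast
        qed
      have "card {B\<in>H. D \<subseteq> B} \<le> card ((\<lambda>y. insert y D) ` A0)"
        by (rule card_mono[OF finite_imageI[OF finA0] sub])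
      also have "\<dots> \<le> card A0" by (rule card_image_le[OF finA0])
      finally show False using big cA0 by simp
    qed
    then obtain B y where B: "B \<in> H" "D \<subseteq> B" "y \<in> B" "y \<notin> D" "y \<notin> A0" by blast
    have BT: "B \<subseteq> T" and cB: "card B = j" using Hmem[OF B(1)] by auto
    have finB: "finite B" using BT finT by (rule finite_subset)
    have "insert y D \<subseteq> B" using B by blast
    moreover have "card (insert y D) = card B" using finD B cD cB j1 by simp
    ultimately have Beq: "B = insert y D" using card_subset_eq[OF finB] by metis
    have yL: "y \<in> L" using B BT unfolding L_def by blast
    have xL: "x \<notin> L" using x unfolding L_def by blast
    have yA: "y \<notin> A" using B x unfolding D_def by blast
    have BL: "B \<inter> L = insert y (A \<inter> L)" using Beq yL xL unfolding D_def by blast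
    have "last cs \<subset> B \<inter> L" using BL cs(3) yA by blast
    moreover have "B \<inter> L \<in> trace H L" using B unfolding trace_def by blast
    moreover have "cs \<noteq> []" using cs(2) by auto
    ultimately have ch: "is_chain_in (trace H L) (cs @ [B \<inter> L])" using chain_snoc cs(1) by blast
    have "card (B \<inter> L) = Suc i"
    proof -
      have "finite (A \<inter> L)" using finA by simp
      then show ?thesis using BL yA A(2) by simp
    qed
    moreover have "length (cs @ [B \<inter> L]) = Suc (Suc i)" using cs(2) by simp
    moreover have "last (cs @ [B \<inter> L]) = B \<inter> L" by simp
    ultimately show ?case using B(1) ch by blast
  qed
  obtain cs where cs: "is_chain_in (trace H L) cs" "length cs = Suc j" using claim[of j] by blast
  have "k_Sperner j (trace H L)" using ts LT cL unfolding TS_def by blast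
  then show False using cs unfolding k_Sperner_def by simp
qed

lemma hyp_bound:
  assumes finT: "finite T" and Hsub: "H \<subseteq> {A. A \<subseteq> T \<and> card A = j}" and j1: "1 \<le> j" and ts: "TS T j j H"
  shows "card H \<le> j * (card T choose (j - 1))"
proof -
  have "H \<subseteq> Pow T" using Hsub by blast
  then have finH: "finite H" using finT by (meson finite_Pow_iff finite_subset)
  have nocore: "\<forall>H'\<subseteq>H. \<not> core j H'"
  proof (intro allI impI)
    fix H' assume "H' \<subseteq> H"
    then have t': "TS T j j H'" by (rule TS_mono[OF _ ts])
    have "H' \<subseteq> {A. A \<subseteq> T \<and> card A = j}" using \<open>H' \<subseteq> H\<close> Hsub by blast
    from core_chain[OF finT this _ j1] t' show "\<not> core j H'" by blast
  qed
  have el: "\<forall>A\<in>H. finite A \<and> card A = j"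
  proof
    fix A assume "A \<in> H"
    then have "A \<subseteq> T" "card A = j" using Hsub by auto
    then show "finite A \<and> card A = j" using finT finite_subset by blast
  qed
  have c1: "card H \<le> j * card (Dset H)" by (rule peel[OF finH el nocore])
  have c2: "card (Dset H) \<le> card {D. D \<subseteq> T \<and> card D = j - 1}"
  proof (rule card_mono)
    show "finite {D. D \<subseteq> T \<and> card D = j - 1}" using finT by simp
    show "Dset H \<subseteq> {D. D \<subseteq> T \<and> card D = j - 1}"
    proof
      fix D assume "D \<in> Dset H"
      then obtain A x where Ax: "A \<in> H" "x \<in> A" "D = A - {x}" unfolding Dset_def by blast
      have "A \<in> {A. A \<subseteq> T \<and> card A = j}" using Ax(1) Hsub by blast
      then have AT: "A \<subseteq> T" and cA: "card A = j" by auto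
      have fA: "finite A" using el Ax(1) by blast
      have "D \<subseteq> T" using AT Ax(3) by blast
      moreover have "card D = j - 1" using fA cA Ax(2,3) by simp
      ultimately show "D \<in> {D. D \<subseteq> T \<and> card D = j - 1}" by blast
    qed
  qed
  have c3: "card {D. D \<subseteq> T \<and> card D = j - 1} = card T choose (j - 1)" by (rule n_subsets[OF finT])
  show ?thesis using c1 c2 c3 by (metis le_trans mult_le_mono2)
qed




lemma choose_absorb_mix:
  "(N - j') * (N choose j') = Suc j' * (N choose Suc j')"
  using binomial_absorption[of j' N] binomial_absorb_comp[of N j'] by simp

lemma level_bound:
  assumes finS: "finite S" and Gsub: "G \<subseteq> {A. A \<subseteq> S \<and> card A = m}"
    and j1: "1 \<le> j" and jm: "j \<le> m" and mn: "m \<le> card S" and ts: "TS S j j G"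
  shows "card G * (card S - m + 1) \<le> j * j * (card S choose m)"
proof -
  define n where "n = card S"
  have Gmem: "A \<subseteq> S \<and> card A = m \<and> finite A" if "A \<in> G" for A
  proof -
    have "A \<in> {A. A \<subseteq> S \<and> card A = m}" using that Gsub by blast
    then have "A \<subseteq> S" "card A = m" by auto
    moreover have "finite A" using \<open>A \<subseteq> S\<close> finS finite_subset by blast
    ultimately show ?thesis by blast
  qed
  have finG: "finite G"
  proof -
    have "G \<subseteq> Pow S" using Gmem by blast
    then show ?thesis using finS by (meson finite_Pow_iff finite_subset)
  qed
  define Ks where "Ks = {K. K \<subseteq> S \<and> card K = m - j}"
  have finKs: "finite Ks" unfolding Ks_def using finS by simp
  have cKs: "card Ks = n choose (m - j)" unfolding Ks_def n_def by (rule n_subsets[OF finS])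
  define N where "N = n - m + j"
  have link: "card {A\<in>G. K \<subseteq> A} \<le> j * (N choose (j - 1))" if KK: "K \<in> Ks" for K
  proof -
    have KS: "K \<subseteq> S" and cK: "card K = m - j" using KK unfolding Ks_def by auto
    have finK: "finite K" using KS finS finite_subset by blast
    define GK where "GK = {A\<in>G. K \<subseteq> A}"
    define HK where "HK = (\<lambda>A. A - K) ` GK"
    have inj: "inj_on (\<lambda>A. A - K) GK"
      by (rule inj_onI) (metis (no_types, lifting) GK_def Un_Diff_cancel2 mem_Collect_eq sup.absorb1)
    have cHK: "card HK = card GK" unfolding HK_def by (rule card_image[OF inj])
    have cSK: "card (S - K) = N" unfolding N_def n_def using card_Diff_subset[OF finK KS] cK jm mn by simp
    have HKsub: "HK \<subseteq> {B. B \<subseteq> S - K \<and> card B = j}"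
    proof
      fix B assume "B \<in> HK"
      then obtain A where A: "A \<in> G" "K \<subseteq> A" "B = A - K" unfolding HK_def GK_def by blast
      have "A \<subseteq> S" "card A = m" "finite A" using Gmem[OF A(1)] by auto
      then have "B \<subseteq> S - K" "card B = j" using A card_Diff_subset[OF finK A(2)] cK jm by auto
      then show "B \<in> {B. B \<subseteq> S - K \<and> card B = j}" by blast
    qed
    have tsK: "TS (S - K) j j HK"
      unfolding TS_def
    proof (intro allI impI)
      fix L' assume L': "L' \<subseteq> S - K \<and> card L' = card (S - K) - j"
      define L where "L = L' \<union> K"
      have finL': "finite L'" using L' finS by (meson finite_Diff finite_subset)
      have disj: "L' \<inter> K = {}" using L' by blast
      have LS: "L \<subseteq> S" using L' KS unfolding L_def by blast
      have cL: "card L = card S - j"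
      proof -
        have "card L = card L' + card K" unfolding L_def using card_Un_disjoint[OF finL' finK disj] .
        then show ?thesis using L' cSK cK jm mn unfolding N_def n_def by simp
      qed
      show "k_Sperner j (trace HK L')"
        unfolding k_Sperner_def
      proof
        assume "\<exists>cs. is_chain_in (trace HK L') cs \<and> length cs = j + 1"
        then obtain cs where cs: "is_chain_in (trace HK L') cs" "length cs = j + 1" by blast
        have elsub: "T \<subseteq> L'" if "T \<in> set cs" for T
          using that cs(1) unfolding is_chain_in_def trace_def by blast
        have elmap: "T \<union> K \<in> trace G L" if "T \<in> set cs" for T
        proof -
          have "T \<in> trace HK L'" using that cs(1) unfolding is_chain_in_def by blast
          then obtain A where A: "A \<in> G" "K \<subseteq> A" "T = (A - K) \<inter> L'"
            unfolding trace_def HK_def GK_def by blast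
          then have "T \<union> K = A \<inter> L" unfolding L_def using disj by blast
          then show ?thesis using A(1) unfolding trace_def by blast
        qed
        have "sorted_wrt (\<subset>) cs" using cs(1) unfolding is_chain_in_def by blast
        then have "sorted_wrt (\<lambda>x y. x \<union> K \<subset> y \<union> K) cs"
        proof (rule sorted_wrt_mono_rel[rotated])
          fix x y assume "x \<in> set cs" "y \<in> set cs" "x \<subset> y"
          then show "x \<union> K \<subset> y \<union> K" using elsub disj by blast
        qed
        then have "sorted_wrt (\<subset>) (map (\<lambda>T. T \<union> K) cs)" by (simp add: sorted_wrt_map)
        moreover have "set (map (\<lambda>T. T \<union> K) cs) \<subseteq> trace G L" using elmap by auto
        ultimately have "is_chain_in (trace G L) (map (\<lambda>T. T \<union> K) cs)" unfolding is_chain_in_def by blast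
        moreover have "length (map (\<lambda>T. T \<union> K) cs) = j + 1" using cs(2) by simp
        moreover have "k_Sperner j (trace G L)" using ts LS cL unfolding TS_def by blast
        ultimately show False unfolding k_Sperner_def by blast
      qed
    qed
    have finSK: "finite (S - K)" using finS by simp
    have "card HK \<le> j * (card (S - K) choose (j - 1))" by (rule hyp_bound[OF finSK HKsub j1 tsK])
    then show ?thesis using cHK cSK unfolding GK_def by simp
  qed
  have dc: "(\<Sum>K\<in>Ks. card {A\<in>G. K \<subseteq> A}) = card G * (m choose (m - j))"
  proof -
    have "(\<Sum>K\<in>Ks. card {A\<in>G. K \<subseteq> A}) = (\<Sum>K\<in>Ks. \<Sum>A\<in>{A\<in>G. K \<subseteq> A}. (1::nat))" by simp
    also have "\<dots> = (\<Sum>A\<in>G. \<Sum>K\<in>{K\<in>Ks. K \<subseteq> A}. (1::nat))" by (rule sum.swap_restrict[OF finKs finG])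
    also have "\<dots> = (\<Sum>A\<in>G. m choose (m - j))"
    proof (rule sum.cong[OF refl])
      fix A assume AG: "A \<in> G"
      have "A \<subseteq> S" "card A = m" "finite A" using Gmem[OF AG] by auto
      have "{K\<in>Ks. K \<subseteq> A} = {K. K \<subseteq> A \<and> card K = m - j}" unfolding Ks_def using \<open>A \<subseteq> S\<close> by blast
      then have "card {K\<in>Ks. K \<subseteq> A} = m choose (m - j)" using n_subsets[OF \<open>finite A\<close>] \<open>card A = m\<close> by simp
      then show "(\<Sum>K\<in>{K\<in>Ks. K \<subseteq> A}. (1::nat)) = m choose (m - j)" by simp
    qed
    also have "\<dots> = card G * (m choose (m - j))" by simp
    finally show ?thesis .
  qed
  have "(\<Sum>K\<in>Ks. card {A\<in>G. K \<subseteq> A}) \<le> (\<Sum>K\<in>Ks. j * (N choose (j - 1)))"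
    by (rule sum_mono) (rule link)
  then have ineq: "card G * (m choose (m - j)) \<le> (n choose (m - j)) * (j * (N choose (j - 1)))"
    using dc cKs by simp
  obtain j' where j': "j = Suc j'" using j1 by (cases j) auto
  have e1: "(N choose (j - 1)) * (n - m + 1) = j * (N choose j)"
    using choose_absorb_mix[of N j'] unfolding j' N_def by (simp add: mult.commute)
  have e2: "(n choose m) * (m choose (m - j)) = (n choose (m - j)) * (N choose j)"
    using choose_mult[of "m - j" m n] mn jm unfolding N_def n_def by simp
  have "card G * (m choose (m - j)) * (n - m + 1) \<le> (n choose (m - j)) * (j * (N choose (j - 1))) * (n - m + 1)"
    using mult_le_mono1[OF ineq] .
  also have "\<dots> = j * ((n choose (m - j)) * ((N choose (j - 1)) * (n - m + 1)))" by (simp only: mult_ac)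
  also have "\<dots> = j * j * ((n choose m) * (m choose (m - j)))" unfolding e1 e2 by (simp only: mult_ac)
  finally have "(card G * (n - m + 1)) * (m choose (m - j)) \<le> (j * j * (n choose m)) * (m choose (m - j))"
    by (simp only: mult_ac)
  moreover have "0 < m choose (m - j)" by simp
  ultimately show ?thesis unfolding n_def mult_le_cancel2 by blast
qed

lemma binom_step:
  assumes "m < j" "2 * j \<le> n"
  shows "real (n choose m) \<le> 2 * real j * real (n choose Suc m) / real n"
proof -
  have "(n - m) * (n choose m) = Suc m * (n choose Suc m)"
    using binomial_absorption[of m n] binomial_absorb_comp[of n m] by simp
  then have eq: "real (n - m) * real (n choose m) = real (Suc m) * real (n choose Suc m)"
    by (metis of_nat_mult)
  have n0: "real n > 0" using assms by simp
  have "real n / 2 \<le> real (n - m)" using assms by (simp add: of_nat_diff)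
  then have "real n / 2 * real (n choose m) \<le> real (n - m) * real (n choose m)"
    by (rule mult_right_mono) simp
  also have "\<dots> = real (Suc m) * real (n choose Suc m)" by (rule eq)
  also have "\<dots> \<le> real j * real (n choose Suc m)"
    by (rule mult_right_mono) (use assms in simp_all)
  finally have "real n * real (n choose m) \<le> 2 * real j * real (n choose Suc m)" by simp
  then show ?thesis using n0 by (simp add: field_simps)
qed

lemma sum_Suc_le:
  assumes "h \<le> n"
  shows "(\<Sum>m\<le>h. real ((Suc n) choose Suc m)) \<le> 2 ^ Suc n"
proof -
  have "(\<Sum>m\<le>h. real ((Suc n) choose Suc m)) = (\<Sum>k\<in>Suc ` {..h}. real ((Suc n) choose k))"
    by (simp add: sum.reindex)
  also have "\<dots> \<le> (\<Sum>k\<le>Suc n. real ((Suc n) choose k))"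
    by (rule sum_mono2) (use assms in auto)
  also have "\<dots> = 2 ^ Suc n"
    using choose_row_sum[of "Suc n"] by (metis of_nat_numeral of_nat_power of_nat_sum)
  finally show ?thesis .
qed

lemma c_mono:
  fixes a b b' :: real
  assumes "0 \<le> b" "0 \<le> b'" "0 \<le> x" "x \<le> K" "n > 0"
  shows "x * b' / n \<le> K / n * (b + b')" "x * b / n \<le> K / n * (b + b')"
proof -
  have "x * b' \<le> K * (b + b')" using assms by (intro mult_mono) auto
  then show "x * b' / n \<le> K / n * (b + b')" using assms by (simp add: divide_right_mono)
  have "x * b \<le> K * (b + b')" using assms by (intro mult_mono) auto
  then show "x * b / n \<le> K / n * (b + b')" using assms by (simp add: divide_right_mono)
qed

lemma low_bound:
  assumes finS: "finite S" and GS: "G \<subseteq> Pow S" and j1: "1 \<le> j" and jn: "2 * j \<le> card S" and ts: "TS S j j G"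
  shows "real (card {A\<in>G. 2 * card A \<le> card S}) \<le> (2 * real j + 2 * real j * real j) * 2 ^ Suc (card S) / real (card S)"
proof -
  define n where "n = card S"
  define h where "h = n div 2"
  define c where "c = (2 * real j + 2 * real j * real j) / real n"
  have n0: "real n > 0" using jn j1 n_def by simp
  have finG: "finite G" using GS finS by (meson finite_Pow_iff finite_subset)
  define Gm where "Gm m = {A\<in>G. card A = m}" for m
  have hh: "2 * a \<le> n \<longleftrightarrow> a \<le> h" for a unfolding h_def by presburger
  have low_eq: "{A\<in>G. 2 * card A \<le> n} = (\<Union>m\<in>{..h}. Gm m)"
    unfolding Gm_def using hh by blast
  have card_low: "card {A\<in>G. 2 * card A \<le> n} = (\<Sum>m\<le>h. card (Gm m))"
    unfolding low_eq
  proof (rule card_UN_disjoint)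
    show "finite {..h}" by simp
    show "\<forall>i\<in>{..h}. finite (Gm i)" using finG unfolding Gm_def by simp
    show "\<forall>i\<in>{..h}. \<forall>j\<in>{..h}. i \<noteq> j \<longrightarrow> Gm i \<inter> Gm j = {}" unfolding Gm_def by blast
  qed
  have per: "real (card (Gm m)) \<le> c * (real (n choose m) + real (n choose Suc m))" if mh: "m \<le> h" for m
  proof -
    have GmS: "Gm m \<subseteq> {A. A \<subseteq> S \<and> card A = m}" unfolding Gm_def using GS by blast
    have cGm: "card (Gm m) \<le> n choose m"
    proof -
      have "card (Gm m) \<le> card {A. A \<subseteq> S \<and> card A = m}"
        by (rule card_mono) (use finS GmS in simp_all)
      then show ?thesis using n_subsets[OF finS] n_def by simp
    qed
    have cnn: "0 \<le> real (n choose m)" "0 \<le> real (n choose Suc m)" by simp_all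
    show ?thesis
    proof (cases "m < j")
      case True
      have "real (card (Gm m)) \<le> real (n choose m)" using cGm by simp
      also have "\<dots> \<le> 2 * real j * real (n choose Suc m) / real n"
        by (rule binom_step[OF True]) (use jn n_def in simp)
      also have "\<dots> \<le> c * (real (n choose m) + real (n choose Suc m))"
        unfolding c_def by (rule c_mono(1)) (use cnn n0 in auto)
      finally show ?thesis .
    next
      case False
      have "2 * m \<le> n" using mh hh by blast
      then have "m \<le> card S" unfolding n_def by linarith
      have tsm: "TS S j j (Gm m)" unfolding Gm_def by (rule TS_mono[OF _ ts]) blast
      have "j \<le> m" using False by simp
      have lb: "card (Gm m) * (n - m + 1) \<le> j * j * (n choose m)"
        using level_bound[OF finS GmS j1 \<open>j \<le> m\<close> \<open>m \<le> card S\<close> tsm] unfolding n_def .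
      have eqr: "real (n - m + 1) = real n - real m + 1" using \<open>2 * m \<le> n\<close> by (simp add: of_nat_diff)
      have "real (2 * m) \<le> real n" using \<open>2 * m \<le> n\<close> by (simp only: of_nat_le_iff)
      then have "2 * real m \<le> real n" by simp
      then have "real n \<le> 2 * real (n - m + 1)" unfolding eqr by (smt (verit))
      then have A1: "real (card (Gm m)) * real n \<le> real (card (Gm m)) * (2 * real (n - m + 1))"
        by (rule mult_left_mono) simp
      have A2: "real (card (Gm m) * (n - m + 1)) \<le> real (j * j * (n choose m))"
        using lb by (simp only: of_nat_le_iff)
      have "real (card (Gm m)) * real n \<le> 2 * (real j * real j * real (n choose m))"
        using A1 A2 unfolding of_nat_mult by linarith
      then have "real (card (Gm m)) \<le> 2 * (real j * real j * real (n choose m)) / real n"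
        by (simp only: pos_le_divide_eq[OF n0])
      also have "\<dots> = (2 * real j * real j) * real (n choose m) / real n" by (simp only: mult_ac)
      also have "\<dots> \<le> c * (real (n choose m) + real (n choose Suc m))"
        unfolding c_def by (rule c_mono(2)) (use cnn n0 in auto)
      finally show ?thesis .
    qed
  qed
  have "real (card {A\<in>G. 2 * card A \<le> n}) = (\<Sum>m\<le>h. real (card (Gm m)))"
    unfolding card_low by simp
  also have "\<dots> \<le> (\<Sum>m\<le>h. c * (real (n choose m) + real (n choose Suc m)))"
    by (rule sum_mono) (rule per, simp)
  also have "\<dots> = c * (\<Sum>m\<le>h. real (Suc n choose Suc m))"
    by (simp add: sum_distrib_left)
  also have "\<dots> \<le> c * 2 ^ Suc n"
    by (rule mult_left_mono[OF sum_Suc_le]) (use n0 in \<open>simp_all add: c_def h_def\<close>)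
  finally show ?thesis unfolding c_def n_def by simp
qed

lemma TS_compl:
  assumes finS: "finite S" and GS: "G \<subseteq> Pow S" and ts: "TS S l k G"
  shows "TS S l k ((\<lambda>A. S - A) ` G)"
  unfolding TS_def
proof (intro allI impI)
  fix L assume L: "L \<subseteq> S \<and> card L = card S - l"
  have LS: "L \<subseteq> S" using L by blast
  show "k_Sperner k (trace ((\<lambda>A. S - A) ` G) L)"
    unfolding k_Sperner_def
  proof
    assume "\<exists>cs. is_chain_in (trace ((\<lambda>A. S - A) ` G) L) cs \<and> length cs = k + 1"
    then obtain cs where cs: "is_chain_in (trace ((\<lambda>A. S - A) ` G) L) cs" "length cs = k + 1" by blast
    have elsub: "T \<subseteq> L" if "T \<in> set cs" for T
      using that cs(1) unfolding is_chain_in_def trace_def by blast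
    have elmap: "L - T \<in> trace G L" if "T \<in> set cs" for T
    proof -
      have "T \<in> trace ((\<lambda>A. S - A) ` G) L" using that cs(1) unfolding is_chain_in_def by blast
      then obtain A where A: "A \<in> G" "T = (S - A) \<inter> L" unfolding trace_def by blast
      then have "L - T = A \<inter> L" using LS by blast
      then show ?thesis using A(1) unfolding trace_def by blast
    qed
    have "sorted_wrt (\<subset>) cs" using cs(1) unfolding is_chain_in_def by blast
    then have "sorted_wrt (\<lambda>x y. L - y \<subset> L - x) cs"
    proof (rule sorted_wrt_mono_rel[rotated])
      fix x y assume "x \<in> set cs" "y \<in> set cs" "x \<subset> y"
      then show "L - y \<subset> L - x" using elsub by blast
    qed
    then have "sorted_wrt (\<subset>) (map (\<lambda>T. L - T) (rev cs))" by (simp add: sorted_wrt_map sorted_wrt_rev)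
    moreover have "set (map (\<lambda>T. L - T) (rev cs)) \<subseteq> trace G L" using elmap by auto
    ultimately have "is_chain_in (trace G L) (map (\<lambda>T. L - T) (rev cs))" unfolding is_chain_in_def by blast
    moreover have "length (map (\<lambda>T. L - T) (rev cs)) = k + 1" using cs(2) by simp
    moreover have "k_Sperner k (trace G L)" using ts L unfolding TS_def by blast
    ultimately show False unfolding k_Sperner_def by blast
  qed
qed

lemma leaf_jj:
  assumes finS: "finite S" and GS: "G \<subseteq> Pow S" and j1: "1 \<le> j" and jn: "2 * j \<le> card S" and ts: "TS S j j G"
  shows "real (card G) \<le> (8 * real j + 8 * real j * real j) * 2 ^ card S / real (card S)"
proof -
  define n where "n = card S"
  define B where "B = (2 * real j + 2 * real j * real j) * 2 ^ Suc n / real n"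
  define Gc where "Gc = (\<lambda>A. S - A) ` G"
  have GcS: "Gc \<subseteq> Pow S" unfolding Gc_def by blast
  have tsc: "TS S j j Gc" unfolding Gc_def by (rule TS_compl[OF finS GS ts])
  have finG: "finite G" using GS finS by (meson finite_Pow_iff finite_subset)
  have finGc: "finite Gc" unfolding Gc_def using finG by simp
  define lo where "lo = {A\<in>G. 2 * card A \<le> n}"
  define hi where "hi = {A\<in>G. \<not> 2 * card A \<le> n}"
  have "G = lo \<union> hi" unfolding lo_def hi_def by blast
  then have c1: "card G \<le> card lo + card hi" by (metis card_Un_le)
  have blo: "real (card lo) \<le> B" unfolding lo_def B_def n_def by (rule low_bound[OF finS GS j1 jn ts])
  have "card hi \<le> card {A\<in>Gc. 2 * card A \<le> n}"
  proof (rule card_inj_on_le)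
    show "inj_on (\<lambda>A. S - A) hi"
    proof (rule inj_onI)
      fix A A' assume "A \<in> hi" "A' \<in> hi" "S - A = S - A'"
      moreover have "A \<subseteq> S" "A' \<subseteq> S" using \<open>A \<in> hi\<close> \<open>A' \<in> hi\<close> GS unfolding hi_def by auto
      ultimately show "A = A'" by blast
    qed
    show "(\<lambda>A. S - A) ` hi \<subseteq> {A\<in>Gc. 2 * card A \<le> n}"
    proof
      fix X assume "X \<in> (\<lambda>A. S - A) ` hi"
      then obtain A where A: "A \<in> G" "\<not> 2 * card A \<le> n" "X = S - A" unfolding hi_def by blast
      have "A \<subseteq> S" using A(1) GS by blast
      then have "card X = n - card A" using A(3) finS unfolding n_def by (simp add: card_Diff_subset finite_subset)
      then have "2 * card X \<le> n" using A(2) by linarith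
      moreover have "X \<in> Gc" unfolding Gc_def using A by blast
      ultimately show "X \<in> {A\<in>Gc. 2 * card A \<le> n}" by blast
    qed
    show "finite {A\<in>Gc. 2 * card A \<le> n}" using finGc by simp
  qed
  moreover have "real (card {A\<in>Gc. 2 * card A \<le> n}) \<le> B"
    unfolding B_def n_def by (rule low_bound[OF finS GcS j1 jn tsc])
  ultimately have bhi: "real (card hi) \<le> B" by linarith
  have "real (card G) \<le> 2 * B" using c1 blo bhi by linarith
  also have "\<dots> = (8 * real j + 8 * real j * real j) * 2 ^ card S / real (card S)"
    unfolding B_def n_def by (simp add: field_simps)
  finally show ?thesis .
qed




abbreviation mid :: "nat \<Rightarrow> nat" where "mid n \<equiv> n choose (n div 2)"

lemma odd_rel: "Suc a * (Suc (2 * a) choose a) = Suc (2 * a) * (2 * a choose a)"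
proof -
  have "Suc a * (Suc (2 * a) choose Suc a) = Suc (2 * a) * (2 * a choose a)"
    by (rule Suc_times_binomial)
  moreover have "Suc (2 * a) choose Suc a = Suc (2 * a) choose a"
    using binomial_symmetric[of "Suc a" "Suc (2 * a)"] by simp
  ultimately show ?thesis by simp
qed

lemma even_rel: "(Suc (Suc (2 * a)) choose Suc a) = 2 * (Suc (2 * a) choose a)"
proof -
  have "Suc a * (Suc (Suc (2 * a)) choose Suc a) = Suc (Suc (2 * a)) * (Suc (2 * a) choose a)"
    by (rule Suc_times_binomial)
  then have "Suc a * (Suc (Suc (2 * a)) choose Suc a) = Suc a * (2 * (Suc (2 * a) choose a))" by simp
  then show ?thesis by (simp only: mult_cancel1) simp
qed

lemma mid_step: "2 * Suc n * mid n \<le> (n + 2) * mid (Suc n)"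
proof (cases "even n")
  case True
  then obtain a where a: "n = 2 * a" by (auto elim: evenE)
  have m1: "mid n = 2 * a choose a" using a by simp
  have m2: "mid (Suc n) = Suc (2 * a) choose a" using a by simp
  have "2 * Suc n * mid n = 2 * (Suc (2 * a) * (2 * a choose a))" unfolding m1 a by simp
  also have "\<dots> = 2 * (Suc a * (Suc (2 * a) choose a))" unfolding odd_rel ..
  also have "\<dots> = (n + 2) * mid (Suc n)" unfolding m2 a by simp
  finally show ?thesis by simp
next
  case False
  then obtain a where "n = 2 * a + 1" by (auto elim: oddE)
  then have a: "n = Suc (2 * a)" by simp
  have m1: "mid n = Suc (2 * a) choose a" using a by simp
  have m2: "mid (Suc n) = Suc (Suc (2 * a)) choose Suc a" using a by (simp del: binomial_Suc_Suc)
  have "mid (Suc n) = 2 * mid n" unfolding m1 m2 by (rule even_rel)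
  then show ?thesis by simp
qed

lemma even_lower: "1 \<le> a \<Longrightarrow> 16 ^ a \<le> 4 * a * (2 * a choose a) ^ 2"
proof (induction a rule: dec_induct)
  case base
  then show ?case by (simp add: numeral_eq_Suc)
next
  case (step a)
  define b where "b = 2 * a choose a"
  define b' where "b' = 2 * Suc a choose Suc a"
  have r1: "Suc a * (Suc (2 * a) choose a) = Suc (2 * a) * b" unfolding b_def by (rule odd_rel)
  have r2: "b' = 2 * (Suc (2 * a) choose a)" unfolding b'_def using even_rel[of a] by simp
  have r3: "Suc a * b' = 2 * Suc (2 * a) * b" using r1 r2 by simp
  have "Suc a * (4 * Suc a * b' ^ 2) = 4 * (Suc a * b') ^ 2" by (simp add: power2_eq_square algebra_simps)
  also have "\<dots> = 16 * (Suc (2 * a)) ^ 2 * b ^ 2" unfolding r3 by (simp add: power2_eq_square algebra_simps)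
  also have "\<dots> \<ge> 16 * (4 * a * Suc a) * b ^ 2"
  proof -
    have "4 * a * Suc a \<le> (Suc (2 * a)) ^ 2" by (simp add: power2_eq_square)
    then show ?thesis by simp
  qed
  finally have "Suc a * (4 * Suc a * b' ^ 2) \<ge> Suc a * (16 * (4 * a * b ^ 2))" by (simp add: algebra_simps)
  then have "4 * Suc a * b' ^ 2 \<ge> 16 * (4 * a * b ^ 2)" by (simp only: Suc_mult_le_cancel1)
  moreover have "16 * 16 ^ a \<le> 16 * (4 * a * b ^ 2)" using step.IH unfolding b_def by simp
  ultimately show ?case unfolding b'_def by simp
qed

lemma mid_lower: "1 \<le> n \<Longrightarrow> 4 ^ n \<le> 8 * n * (mid n) ^ 2"
proof (cases "even n")
  case True
  assume n1: "1 \<le> n"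
  then obtain a where a: "n = 2 * a" using True by (auto elim: evenE)
  then have "1 \<le> a" using n1 by simp
  have "4 ^ n = (16::nat) ^ a" unfolding a by (simp add: power_mult)
  also have "\<dots> \<le> 4 * a * (2 * a choose a) ^ 2" by (rule even_lower[OF \<open>1 \<le> a\<close>])
  also have "\<dots> \<le> 8 * n * (mid n) ^ 2" using a by simp
  finally show ?thesis .
next
  case False
  assume n1: "1 \<le> n"
  then obtain a' where "n = 2 * a' + 1" using False by (auto elim: oddE)
  then obtain a where a: "n = Suc (2 * a)" by simp
  have m1: "mid n = Suc (2 * a) choose a" using a by simp
  have ge: "2 * a choose a \<le> mid n"
  proof -
    have "Suc a * (Suc (2 * a) choose a) = Suc (2 * a) * (2 * a choose a)" by (rule odd_rel)
    moreover have "Suc a * (2 * a choose a) \<le> Suc (2 * a) * (2 * a choose a)" by (rule mult_le_mono1) simp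
    ultimately have "Suc a * (2 * a choose a) \<le> Suc a * (Suc (2 * a) choose a)" by simp
    then show ?thesis unfolding m1 by (simp only: Suc_mult_le_cancel1)
  qed
  show ?thesis
  proof (cases "a = 0")
    case True
    then show ?thesis using a by simp
  next
    case False
    then have "1 \<le> a" by simp
    have "4 ^ n = 4 * (16::nat) ^ a" unfolding a by (simp add: power_mult)
    also have "\<dots> \<le> 4 * (4 * a * (2 * a choose a) ^ 2)" using even_lower[OF \<open>1 \<le> a\<close>] by simp
    also have "\<dots> \<le> 4 * (4 * a * (mid n) ^ 2)" using ge by (simp add: power_mono)
    also have "\<dots> \<le> 8 * n * (mid n) ^ 2" using a by simp
    finally show ?thesis .
  qed
qed




definition Claim :: "nat \<Rightarrow> nat \<Rightarrow> bool" where
  "Claim l k \<longleftrightarrow> (\<exists>C\<ge>0. \<exists>N0. \<forall>(S::nat set) F. finite S \<and> N0 \<le> card S \<and> F \<subseteq> Pow S \<and> TS S l k F \<longrightarrow>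
      real (card F) \<le> (real k - real l) * real (mid (card S)) + C * 2 ^ card S / real (card S))"

lemma claim0: "Claim 0 k"
  unfolding Claim_def
proof (intro exI[of _ 0] conjI allI impI)
  fix S :: "nat set" and F assume h: "finite S \<and> 0 \<le> card S \<and> F \<subseteq> Pow S \<and> TS S 0 k F"
  then have "real (card F) \<le> real k * real (mid (card S))" using leaf0 by blast
  then show "real (card F) \<le> (real k - real 0) * real (mid (card S)) + 0 * 2 ^ card S / real (card S)" by simp
qed simp

lemma claimjj: "1 \<le> j \<Longrightarrow> Claim j j"
  unfolding Claim_def
proof (intro exI[of _ "8 * real j + 8 * real j * real j"] conjI exI[of _ "2 * j"] allI impI)
  assume j1: "1 \<le> j"
  fix S :: "nat set" and F assume h: "finite S \<and> 2 * j \<le> card S \<and> F \<subseteq> Pow S \<and> TS S j j F"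
  then have "real (card F) \<le> (8 * real j + 8 * real j * real j) * 2 ^ card S / real (card S)"
    using leaf_jj j1 by blast
  then show "real (card F) \<le> (real j - real j) * real (mid (card S)) + (8 * real j + 8 * real j * real j) * 2 ^ card S / real (card S)"
    by simp
qed simp

lemma pow_div_mono:
  assumes "2 \<le> n"
  shows "(2::real) ^ (n - 1) / real (n - 1) \<le> 2 ^ n / real n"
proof -
  obtain m where m: "n = Suc m" using assms by (cases n) auto
  have m1: "1 \<le> m" using assms m by simp
  have "real (Suc m) \<le> 2 * real m" using m1 by simp
  then have "(2::real) ^ m * real (Suc m) \<le> 2 ^ m * (2 * real m)" by (rule mult_left_mono) simp
  then have "(2::real) ^ m * real (Suc m) \<le> 2 ^ Suc m * real m" by simp
  then show ?thesis unfolding m using m1 by (simp add: divide_simps)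
qed

lemma mid_bound:
  assumes "2 \<le> n"
  shows "2 * real (mid (n - 1)) \<le> real (mid n) + 2 ^ n / real n"
proof -
  obtain m where m: "n = Suc m" using assms by (cases n) auto
  have "2 * Suc m * mid m \<le> (m + 2) * mid (Suc m)" by (rule mid_step)
  then have "real (2 * Suc m * mid m) \<le> real ((m + 2) * mid (Suc m))" by (simp only: of_nat_le_iff)
  then have a: "2 * real (Suc m) * real (mid m) \<le> (real (Suc m) + 1) * real (mid (Suc m))" by (simp add: algebra_simps)
  have n0: "real (Suc m) > 0" by simp
  have "2 * real (mid m) \<le> (real (Suc m) + 1) * real (mid (Suc m)) / real (Suc m)"
    using a n0 by (simp add: pos_le_divide_eq algebra_simps)
  also have "\<dots> = real (mid (Suc m)) + real (mid (Suc m)) / real (Suc m)"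
    using n0 by (simp add: field_simps)
  also have "\<dots> \<le> real (mid (Suc m)) + 2 ^ Suc m / real (Suc m)"
  proof -
    have "mid (Suc m) \<le> 2 ^ Suc m" by (rule binomial_le_pow2)
    then have "real (mid (Suc m)) \<le> 2 ^ Suc m" by (metis of_nat_le_iff of_nat_numeral of_nat_power)
    then show ?thesis using n0 by (simp add: divide_right_mono)
  qed
  finally show ?thesis unfolding m by simp
qed

lemma claim_step:
  assumes l1: "1 \<le> l" and lk: "l < k" and c1: "Claim (l - 1) k" and c2: "Claim l (k - 1)"
  shows "Claim l k"
proof -
  obtain C1 N1 where C1: "C1 \<ge> 0" and H1: "\<forall>(S::nat set) F. finite S \<and> N1 \<le> card S \<and> F \<subseteq> Pow S \<and> TS S (l - 1) k F \<longrightarrow>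
      real (card F) \<le> (real k - real (l - 1)) * real (mid (card S)) + C1 * 2 ^ card S / real (card S)"
    using c1 unfolding Claim_def by (elim exE conjE) blast
  obtain C2 N2 where C2: "C2 \<ge> 0" and H2: "\<forall>(S::nat set) F. finite S \<and> N2 \<le> card S \<and> F \<subseteq> Pow S \<and> TS S l (k - 1) F \<longrightarrow>
      real (card F) \<le> (real (k - 1) - real l) * real (mid (card S)) + C2 * 2 ^ card S / real (card S)"
    using c2 unfolding Claim_def by (elim exE conjE) blast
  define C where "C = C1 + C2 + (real k - real l)"
  have Cnn: "C \<ge> 0" unfolding C_def using C1 C2 lk by simp
  show ?thesis
    unfolding Claim_def
  proof (intro exI[of _ C] conjI exI[of _ "N1 + N2 + l + 2"] allI impI)
    show "C \<ge> 0" by (rule Cnn)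
    fix S :: "nat set" and F
    assume h: "finite S \<and> N1 + N2 + l + 2 \<le> card S \<and> F \<subseteq> Pow S \<and> TS S l k F"
    then have finS: "finite S" and nS: "N1 + N2 + l + 2 \<le> card S" and FS: "F \<subseteq> Pow S" and ts: "TS S l k F" by auto
    define n where "n = card S"
    have n2: "2 \<le> n" using nS n_def by simp
    then have "S \<noteq> {}" using n_def by auto
    then obtain x where x: "x \<in> S" by blast
    define S' where "S' = S - {x}"
    have finS': "finite S'" unfolding S'_def using finS by simp
    have cS': "card S' = n - 1" unfolding S'_def n_def using finS x by simp
    define D where "D = (\<lambda>A. A - {x}) ` F"
    define P where "P = {B\<in>F. x \<notin> B \<and> insert x B \<in> F}"
    have DS: "D \<subseteq> Pow S'" unfolding D_def S'_def using FS by blast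
    have PS: "P \<subseteq> Pow S'" unfolding P_def S'_def using FS by blast
    have tsD: "TS S' (l - 1) k D" unfolding S'_def D_def by (rule TS_delete[OF finS x l1 ts])
    have tsP: "TS S' l (k - 1) P" unfolding S'_def P_def
      by (rule TS_pairs[OF finS x _ _ ts]) (use nS n_def lk in simp_all)
    have finF: "finite F" using FS finS by (meson finite_Pow_iff finite_subset)
    have split: "card F \<le> card D + card P" unfolding D_def P_def by (rule card_split[OF finF])
    define u' where "u' = (2::real) ^ (n - 1) / real (n - 1)"
    define u where "u = (2::real) ^ n / real n"
    have uu: "u' \<le> u" unfolding u'_def u_def by (rule pow_div_mono[OF n2])
    have u'0: "u' \<ge> 0" unfolding u'_def by simp
    have "N1 \<le> card S'" using cS' nS n_def by linarith
    then have hD0: "real (card D) \<le> (real k - real (l - 1)) * real (mid (card S')) + C1 * 2 ^ card S' / real (card S')"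
      using H1 finS' DS tsD by blast
    have rl: "real (l - 1) = real l - 1" using l1 by (simp add: of_nat_diff)
    have hD: "real (card D) \<le> (real k - real l + 1) * real (mid (n - 1)) + C1 * u'"
      using hD0 unfolding cS' rl u'_def by (simp add: algebra_simps)
    have "N2 \<le> card S'" using cS' nS n_def by linarith
    then have hP0: "real (card P) \<le> (real (k - 1) - real l) * real (mid (card S')) + C2 * 2 ^ card S' / real (card S')"
      using H2 finS' PS tsP by blast
    have rk: "real (k - 1) = real k - 1" using lk by (simp add: of_nat_diff)
    have hP: "real (card P) \<le> (real k - real l - 1) * real (mid (n - 1)) + C2 * u'"
      using hP0 unfolding cS' rk u'_def by (simp add: algebra_simps)
    have "real (card F) \<le> real (card D) + real (card P)" using split by linarith
    also have "\<dots> \<le> (real k - real l) * (2 * real (mid (n - 1))) + (C1 + C2) * u'"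
      using hD hP by (simp add: algebra_simps)
    also have "\<dots> \<le> (real k - real l) * (real (mid n) + u) + (C1 + C2) * u"
    proof (rule add_mono)
      show "(real k - real l) * (2 * real (mid (n - 1))) \<le> (real k - real l) * (real (mid n) + u)"
        by (rule mult_left_mono) (use mid_bound[OF n2] lk in \<open>simp_all add: u_def\<close>)
      show "(C1 + C2) * u' \<le> (C1 + C2) * u" by (rule mult_left_mono[OF uu]) (use C1 C2 in simp)
    qed
    also have "\<dots> = (real k - real l) * real (mid n) + C * u" unfolding C_def by (simp add: algebra_simps)
    finally show "real (card F) \<le> (real k - real l) * real (mid (card S)) + C * 2 ^ card S / real (card S)"
      unfolding u_def n_def by simp
  qed
qed

lemma claim_all: "l \<le> k \<Longrightarrow> Claim l k"
proof (induction l arbitrary: k)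
  case 0
  show ?case by (rule claim0)
next
  case (Suc l)
  note IHo = Suc.IH
  have gen: "Suc l \<le> k \<Longrightarrow> Claim (Suc l) k" for k
  proof (induction k)
    case 0 then show ?case by simp
  next
    case (Suc k')
    show ?case
    proof (cases "Suc l = Suc k'")
      case True
      then show ?thesis using claimjj[of "Suc l"] by simp
    next
      case False
      then have lk': "Suc l \<le> k'" using Suc.prems by simp
      then have c2: "Claim (Suc l) k'" by (rule Suc.IH)
      have "l \<le> Suc k'" using Suc.prems by simp
      then have c1: "Claim l (Suc k')" by (rule IHo)
      have "Claim (Suc l) (Suc k')"
        by (rule claim_step) (use c1 c2 lk' in simp_all)
      then show ?thesis .
    qed
  qed
  show ?case using gen Suc.prems by blast
qed

lemma final_est:
  fixes C \<epsilon> :: real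
  assumes C0: "C \<ge> 0" and e0: "\<epsilon> > 0" and n1: "1 \<le> n" and big: "8 * C ^ 2 \<le> \<epsilon> ^ 2 * real n"
  shows "C * 2 ^ n / real n \<le> \<epsilon> * real (mid n)"
proof -
  have n0: "real n > 0" using n1 by simp
  have "4 ^ n \<le> 8 * n * (mid n) ^ 2" by (rule mid_lower[OF n1])
  then have "real (4 ^ n) \<le> real (8 * n * (mid n) ^ 2)" by (simp only: of_nat_le_iff)
  then have p4: "(4::real) ^ n \<le> 8 * real n * real (mid n) ^ 2" by simp
  have sq: "((2::real) ^ n) ^ 2 = 4 ^ n"
    by (simp add: power2_eq_square power_mult_distrib[symmetric])
  have "(C * 2 ^ n / real n) ^ 2 = C ^ 2 * 4 ^ n / real n ^ 2"
    by (simp add: power_divide power_mult_distrib sq)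
  also have "\<dots> \<le> C ^ 2 * (8 * real n * real (mid n) ^ 2) / real n ^ 2"
    by (rule divide_right_mono[OF mult_left_mono[OF p4]]) simp_all
  also have "\<dots> = (8 * C ^ 2) * real (mid n) ^ 2 / real n"
    using n0 by (simp add: power2_eq_square field_simps)
  also have "\<dots> \<le> (\<epsilon> ^ 2 * real n) * real (mid n) ^ 2 / real n"
    by (rule divide_right_mono[OF mult_right_mono[OF big]]) simp_all
  also have "\<dots> = (\<epsilon> * real (mid n)) ^ 2"
    using n0 by (simp add: power_mult_distrib)
  finally have "(C * 2 ^ n / real n) ^ 2 \<le> (\<epsilon> * real (mid n)) ^ 2" .
  moreover have "0 \<le> \<epsilon> * real (mid n)" using e0 by simp
  ultimately show ?thesis by (rule power2_le_imp_le)
qed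

theorem theorem1p2:
  fixes k l' :: nat
  assumes "0 < l'" and "l' < k"
  shows "\<forall>\<epsilon>>(0::real). \<exists>N. \<forall>n\<ge>N. \<forall>\<F>.
           \<F> \<subseteq> Pow {1..n} \<and> trace_k_Sperner n (n - l') k \<F> \<longrightarrow>
           real (card \<F>) \<le> (real k - real l' + \<epsilon>) * real (n choose (n div 2))"
proof (intro allI impI)
  fix \<epsilon> :: real assume e0: "\<epsilon> > 0"
  have "Claim l' k" using assms by (intro claim_all) simp
  then obtain C N0 where C0: "C \<ge> 0" and H: "\<forall>(S::nat set) F. finite S \<and> N0 \<le> card S \<and> F \<subseteq> Pow S \<and> TS S l' k F \<longrightarrow>
      real (card F) \<le> (real k - real l') * real (mid (card S)) + C * 2 ^ card S / real (card S)"
    unfolding Claim_def by (elim exE conjE) blast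
  define N where "N = max (max N0 1) (nat \<lceil>8 * C ^ 2 / \<epsilon> ^ 2\<rceil>)"
  show "\<exists>N. \<forall>n\<ge>N. \<forall>\<F>. \<F> \<subseteq> Pow {1..n} \<and> trace_k_Sperner n (n - l') k \<F> \<longrightarrow>
           real (card \<F>) \<le> (real k - real l' + \<epsilon>) * real (n choose (n div 2))"
  proof (intro exI[of _ N] allI impI)
    fix n F assume nN: "N \<le> n" and h: "F \<subseteq> Pow {1..n} \<and> trace_k_Sperner n (n - l') k F"
    have cS: "card {1..n} = n" by simp
    have ts: "TS {1..n} l' k F" using h unfolding TS_def trace_k_Sperner_def cS by blast
    have "N0 \<le> card {1..n}" using nN unfolding N_def cS by simp
    then have b1: "real (card F) \<le> (real k - real l') * real (mid n) + C * 2 ^ n / real n"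
      using H h ts cS by (metis finite_atLeastAtMost)
    have n1: "1 \<le> n" using nN unfolding N_def by simp
    have "8 * C ^ 2 / \<epsilon> ^ 2 \<le> real n"
    proof -
      have "8 * C ^ 2 / \<epsilon> ^ 2 \<le> real (nat \<lceil>8 * C ^ 2 / \<epsilon> ^ 2\<rceil>)" by linarith
      also have "\<dots> \<le> real n"
      proof -
        have "nat \<lceil>8 * C ^ 2 / \<epsilon> ^ 2\<rceil> \<le> n" using nN unfolding N_def by (simp only: max.bounded_iff)
        then show ?thesis by (simp only: of_nat_le_iff)
      qed
      finally show ?thesis .
    qed
    then have big: "8 * C ^ 2 \<le> \<epsilon> ^ 2 * real n" using e0 by (simp add: pos_divide_le_eq mult.commute)
    have "C * 2 ^ n / real n \<le> \<epsilon> * real (mid n)" by (rule final_est[OF C0 e0 n1 big])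
    then show "real (card F) \<le> (real k - real l' + \<epsilon>) * real (n choose (n div 2))"
      using b1 by (simp add: algebra_simps)
  qed
qed


end
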